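(* Let $P$ and $Q$ be irreducible transition matrices on the finite set $S$, both reversible with respect to $\pi$. If $P$ efficiency-dominates $Q$ and $P\ne Q$, then $\mathrm{trace}(P)<\mathrm{trace}(Q)$.
   Context: $S$ is a finite set, and $\pi$ is a probability distribution on $S$ with $\pi(x)>0$ for all $x$. A transition matrix $P$ is reversible with respect to $\pi$ if $\pi(x)P(x,y)=\pi(y)P(y,x)$ for all $x,y$; irreducible if every state can be reached from every other with positive probability in some number of steps. For a Markov chain $X_1,X_2,\dots$ with transition matrix $P$ and $X_1\sim\pi$, $v(f,P)=\lim_{N\to\infty}\frac1N\mathrm{Var}\big(\sum_{i=1}^N f(X_i)\big)$. $P$ efficiency-dominates $Q$ if $v(f,P)\le v(f,Q)$ for all $f:S\to\mathbb R$. *)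

theory Defs
  imports Complex_Main "HOL-Library.FuncSet"
begin

definition transition_matrix :: "('a::finite \<Rightarrow> 'a \<Rightarrow> real) \<Rightarrow> bool" where
  "transition_matrix P \<longleftrightarrow> (\<forall>x y. 0 \<le> P x y) \<and> (\<forall>x. (\<Sum>y\<in>UNIV. P x y) = 1)"

definition prob_distribution :: "('a::finite \<Rightarrow> real) \<Rightarrow> bool" where
  "prob_distribution \<pi> \<longleftrightarrow> (\<forall>x. 0 \<le> \<pi> x) \<and> (\<Sum>x\<in>UNIV. \<pi> x) = 1"

fun mat_pow :: "('a::finite \<Rightarrow> 'a \<Rightarrow> real) \<Rightarrow> nat \<Rightarrow> 'a \<Rightarrow> 'a \<Rightarrow> real" where
  "mat_pow P 0 = (\<lambda>x y. if x = y then 1 else 0)"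
| "mat_pow P (Suc n) = (\<lambda>x y. \<Sum>z\<in>UNIV. mat_pow P n x z * P z y)"

definition reversible_wrt :: "('a::finite \<Rightarrow> real) \<Rightarrow> ('a \<Rightarrow> 'a \<Rightarrow> real) \<Rightarrow> bool" where
  "reversible_wrt \<pi> P \<longleftrightarrow> (\<forall>x y. \<pi> x * P x y = \<pi> y * P y x)"

definition irreducible_tm :: "('a::finite \<Rightarrow> 'a \<Rightarrow> real) \<Rightarrow> bool" where
  "irreducible_tm P \<longleftrightarrow> (\<forall>x y. \<exists>n. 0 < mat_pow P n x y)"

definition trace_tm :: "('a::finite \<Rightarrow> 'a \<Rightarrow> real) \<Rightarrow> real" where
  "trace_tm P = (\<Sum>x\<in>UNIV. P x x)"

text \<open>Law of the path (X_1,...,X_N), indexed 0..N-1, of the chain with X_1 ~ pi.\<close>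
definition path_prob :: "('a::finite \<Rightarrow> real) \<Rightarrow> ('a \<Rightarrow> 'a \<Rightarrow> real) \<Rightarrow> nat \<Rightarrow> (nat \<Rightarrow> 'a) \<Rightarrow> real" where
  "path_prob \<pi> P N xs = \<pi> (xs 0) * (\<Prod>i<N - 1. P (xs i) (xs (Suc i)))"

definition path_expectation :: "('a::finite \<Rightarrow> real) \<Rightarrow> ('a \<Rightarrow> 'a \<Rightarrow> real) \<Rightarrow> nat \<Rightarrow> ((nat \<Rightarrow> 'a) \<Rightarrow> real) \<Rightarrow> real" where
  "path_expectation \<pi> P N g = (\<Sum>xs\<in>PiE {..<N} (\<lambda>_. UNIV). path_prob \<pi> P N xs * g xs)"

definition sum_variance :: "('a::finite \<Rightarrow> real) \<Rightarrow> ('a \<Rightarrow> 'a \<Rightarrow> real) \<Rightarrow> ('a \<Rightarrow> real) \<Rightarrow> nat \<Rightarrow> real" where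
  "sum_variance \<pi> P f N =
     path_expectation \<pi> P N (\<lambda>xs. (\<Sum>i<N. f (xs i))^2)
     - (path_expectation \<pi> P N (\<lambda>xs. \<Sum>i<N. f (xs i)))^2"

definition asymptotic_variance :: "('a::finite \<Rightarrow> real) \<Rightarrow> ('a \<Rightarrow> 'a \<Rightarrow> real) \<Rightarrow> ('a \<Rightarrow> real) \<Rightarrow> real" where
  "asymptotic_variance \<pi> P f = lim (\<lambda>N. sum_variance \<pi> P f N / real N)"

definition efficiency_dominates :: "('a::finite \<Rightarrow> real) \<Rightarrow> ('a \<Rightarrow> 'a \<Rightarrow> real) \<Rightarrow> ('a \<Rightarrow> 'a \<Rightarrow> real) \<Rightarrow> bool" where
  "efficiency_dominates \<pi> P Q \<longleftrightarrow> (\<forall>f. asymptotic_variance \<pi> P f \<le> asymptotic_variance \<pi> Q f)"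

end

theory Submission
  imports Defs "HOL-Analysis.Analysis"
begin


definition mv :: "('a::finite \<Rightarrow> 'a \<Rightarrow> real) \<Rightarrow> ('a \<Rightarrow> real) \<Rightarrow> 'a \<Rightarrow> real" where
  "mv P u = (\<lambda>x. \<Sum>y\<in>UNIV. P x y * u y)"

definition ip :: "('a::finite \<Rightarrow> real) \<Rightarrow> ('a \<Rightarrow> real) \<Rightarrow> ('a \<Rightarrow> real) \<Rightarrow> real" where
  "ip \<pi> a b = (\<Sum>x\<in>UNIV. \<pi> x * a x * b x)"

lemma stat:
  assumes "transition_matrix P" "reversible_wrt \<pi> P"
  shows "(\<Sum>x\<in>UNIV. \<pi> x * P x y) = \<pi> y"
proof -
  have "(\<Sum>x\<in>UNIV. \<pi> x * P x y) = (\<Sum>x\<in>UNIV. \<pi> y * P y x)"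
    using assms(2) unfolding reversible_wrt_def by simp
  also have "\<dots> = \<pi> y" using assms(1) unfolding transition_matrix_def by (simp add: sum_distrib_left[symmetric])
  finally show ?thesis .
qed

lemma selfadj:
  assumes "reversible_wrt \<pi> P"
  shows "ip \<pi> a (mv P b) = ip \<pi> (mv P a) b"
proof -
  have "ip \<pi> a (mv P b) = (\<Sum>x\<in>UNIV. \<Sum>y\<in>UNIV. (\<pi> x * P x y) * a x * b y)"
    unfolding ip_def mv_def by (simp add: sum_distrib_left sum_distrib_right mult.assoc mult.left_commute)
  also have "\<dots> = (\<Sum>x\<in>UNIV. \<Sum>y\<in>UNIV. (\<pi> y * P y x) * a x * b y)"
    using assms unfolding reversible_wrt_def by simp
  also have "\<dots> = (\<Sum>y\<in>UNIV. \<Sum>x\<in>UNIV. (\<pi> y * P y x) * a x * b y)"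
    by (rule sum.swap)
  also have "\<dots> = ip \<pi> (mv P a) b"
    unfolding ip_def mv_def by (simp add: sum_distrib_left sum_distrib_right mult.assoc mult.left_commute)
  finally show ?thesis .
qed

lemma psd_eq:
  assumes "transition_matrix P" "reversible_wrt \<pi> P"
  shows "2 * (ip \<pi> w w - ip \<pi> w (mv P w)) = (\<Sum>x\<in>UNIV. \<Sum>y\<in>UNIV. \<pi> x * P x y * (w x - w y)^2)"
proof -
  have r: "(\<Sum>x\<in>UNIV. \<Sum>y\<in>UNIV. \<pi> x * P x y * (w x)^2) = ip \<pi> w w"
    using assms(1) unfolding ip_def transition_matrix_def
    by (simp add: sum_distrib_left[symmetric] sum_distrib_right[symmetric] power2_eq_square mult.assoc)
  have l: "(\<Sum>x\<in>UNIV. \<Sum>y\<in>UNIV. \<pi> x * P x y * (w y)^2) = ip \<pi> w w"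
  proof -
    have "(\<Sum>x\<in>UNIV. \<Sum>y\<in>UNIV. \<pi> x * P x y * (w y)^2) = (\<Sum>y\<in>UNIV. \<Sum>x\<in>UNIV. \<pi> x * P x y * (w y)^2)"
      by (rule sum.swap)
    also have "\<dots> = (\<Sum>y\<in>UNIV. (\<Sum>x\<in>UNIV. \<pi> x * P x y) * (w y)^2)"
      by (simp add: sum_distrib_right)
    also have "\<dots> = ip \<pi> w w" using stat[OF assms] unfolding ip_def by (simp add: power2_eq_square mult.assoc)
    finally show ?thesis .
  qed
  have m: "(\<Sum>x\<in>UNIV. \<Sum>y\<in>UNIV. \<pi> x * P x y * (w x * w y)) = ip \<pi> w (mv P w)"
    unfolding ip_def mv_def by (simp add: sum_distrib_left mult.assoc mult.left_commute)
  have "(\<Sum>x\<in>UNIV. \<Sum>y\<in>UNIV. \<pi> x * P x y * (w x - w y)^2)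
     = (\<Sum>x\<in>UNIV. \<Sum>y\<in>UNIV. \<pi> x * P x y * (w x)^2) + (\<Sum>x\<in>UNIV. \<Sum>y\<in>UNIV. \<pi> x * P x y * (w y)^2)
       - 2 * (\<Sum>x\<in>UNIV. \<Sum>y\<in>UNIV. \<pi> x * P x y * (w x * w y))"
    by (simp add: power2_diff algebra_simps sum.distrib sum_subtractf sum_distrib_left)
  then show ?thesis using r l m by simp
qed

lemma psd:
  assumes "transition_matrix P" "reversible_wrt \<pi> P" "\<forall>x. 0 \<le> \<pi> x"
  shows "ip \<pi> w (mv P w) \<le> ip \<pi> w w"
proof -
  have "0 \<le> (\<Sum>x\<in>UNIV. \<Sum>y\<in>UNIV. \<pi> x * P x y * (w x - w y)^2)"
    using assms unfolding transition_matrix_def by (intro sum_nonneg) auto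
  then have "0 \<le> 2 * (ip \<pi> w w - ip \<pi> w (mv P w))" unfolding psd_eq[OF assms(1,2)] .
  then show ?thesis by (simp add: algebra_simps)
qed




lemma mat_pow_nonneg: "transition_matrix P \<Longrightarrow> 0 \<le> mat_pow P n x y"
  by (induction n arbitrary: y) (auto simp: transition_matrix_def intro!: sum_nonneg)

lemma harmonic_const:
  assumes "transition_matrix P" "\<forall>x y. 0 < P x y \<longrightarrow> g x = g y" "0 < mat_pow P n x y"
  shows "g x = g y"
  using assms(3)
proof (induction n arbitrary: y)
  case 0 then show ?case by (auto split: if_splits)
next
  case (Suc n)
  then have "0 < (\<Sum>z\<in>UNIV. mat_pow P n x z * P z y)" by simp
  then obtain z where "0 < mat_pow P n x z * P z y"
    by (metis (no_types, lifting) not_le sum_nonpos)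
  moreover have "0 \<le> mat_pow P n x z" "0 \<le> P z y"
    using mat_pow_nonneg[OF assms(1)] assms(1) unfolding transition_matrix_def by auto
  ultimately have "0 < mat_pow P n x z" "0 < P z y"
    by (simp_all add: zero_less_mult_iff)
  then show ?case using Suc.IH assms(2) by metis
qed

lemma pi_mv:
  assumes "transition_matrix P" "reversible_wrt \<pi> P"
  shows "(\<Sum>x\<in>UNIV. \<pi> x * mv P g x) = (\<Sum>x\<in>UNIV. \<pi> x * g x)"
proof -
  have "(\<Sum>x\<in>UNIV. \<pi> x * mv P g x) = (\<Sum>x\<in>UNIV. \<Sum>y\<in>UNIV. \<pi> x * P x y * g y)"
    unfolding mv_def by (simp add: sum_distrib_left mult.assoc)
  also have "\<dots> = (\<Sum>y\<in>UNIV. \<Sum>x\<in>UNIV. \<pi> x * P x y * g y)" by (rule sum.swap)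
  also have "\<dots> = (\<Sum>y\<in>UNIV. (\<Sum>x\<in>UNIV. \<pi> x * P x y) * g y)" by (simp add: sum_distrib_right)
  also have "\<dots> = (\<Sum>x\<in>UNIV. \<pi> x * g x)" using stat[OF assms] by simp
  finally show ?thesis .
qed

lemma poisson:
  fixes \<pi> :: "'a::finite \<Rightarrow> real"
  assumes "prob_distribution \<pi>" "\<forall>x. 0 < \<pi> x" "transition_matrix P" "reversible_wrt \<pi> P"
    "irreducible_tm P" "(\<Sum>x\<in>UNIV. \<pi> x * h x) = 0"
  shows "\<exists>u. \<forall>x. u x - mv P u x = h x"
proof -
  define L where "L g = (\<lambda>x. g x - mv P g x + (\<Sum>y\<in>UNIV. \<pi> y * g y))" for g :: "'a \<Rightarrow> real"
  have s1: "(\<Sum>x\<in>UNIV. \<pi> x) = 1" using assms(1) unfolding prob_distribution_def by simp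
  have sumL: "(\<Sum>x\<in>UNIV. \<pi> x * L g x) = (\<Sum>x\<in>UNIV. \<pi> x * g x)" for g
  proof -
    have "(\<Sum>x\<in>UNIV. \<pi> x * L g x) = (\<Sum>x\<in>UNIV. \<pi> x * g x) - (\<Sum>x\<in>UNIV. \<pi> x * mv P g x)
        + (\<Sum>x\<in>UNIV. \<pi> x) * (\<Sum>y\<in>UNIV. \<pi> y * g y)"
      unfolding L_def by (simp add: algebra_simps sum.distrib sum_subtractf sum_distrib_right)
    then show ?thesis using pi_mv[OF assms(3,4)] s1 by simp
  qed
  have ker: "g = (\<lambda>_. 0)" if "L g = (\<lambda>_. 0)" for g
  proof -
    have m0: "(\<Sum>x\<in>UNIV. \<pi> x * g x) = 0" using sumL[of g] that by simp
    then have gp: "g x = mv P g x" for x using fun_cong[OF that, of x] unfolding L_def by simp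
    then have "mv P g = g" by auto
    then have "ip \<pi> g g - ip \<pi> g (mv P g) = 0" by simp
    then have z: "(\<Sum>x\<in>UNIV. \<Sum>y\<in>UNIV. \<pi> x * P x y * (g x - g y)^2) = 0"
      using psd_eq[OF assms(3,4), of g] by simp
    have nn: "0 \<le> \<pi> x * P x y * (g x - g y)^2" for x y
      using assms(2,3) unfolding transition_matrix_def by (simp add: less_imp_le)
    have "\<pi> x * P x y * (g x - g y)^2 = 0" for x y
    proof -
      have "(\<Sum>y\<in>UNIV. \<pi> x * P x y * (g x - g y)^2) = 0"
        using z by (subst (asm) sum_nonneg_eq_0_iff) (auto intro!: sum_nonneg nn)
      then show ?thesis by (subst (asm) sum_nonneg_eq_0_iff) (auto intro!: nn)
    qed
    then have edge: "g x = g y" if "0 < P x y" for x y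
      using that assms(2) by (metis mult_eq_0_iff power_eq_0_iff right_minus_eq less_irrefl)
    have edge': "\<forall>x y. 0 < P x y \<longrightarrow> g x = g y" using edge by blast
    have const: "g x = g y" for x y
    proof -
      obtain n where "0 < mat_pow P n x y" using assms(5) unfolding irreducible_tm_def by blast
      then show ?thesis using harmonic_const[OF assms(3) edge'] by blast
    qed
    fix x0
    have "(\<Sum>x\<in>UNIV. \<pi> x * g x) = (\<Sum>x\<in>UNIV. \<pi> x) * g x0"
    proof -
      have "(\<Sum>x\<in>UNIV. \<pi> x * g x) = (\<Sum>x\<in>UNIV. \<pi> x * g x0)"
        by (intro sum.cong refl) (metis const)
      then show ?thesis by (simp add: sum_distrib_right)
    qed
    then have "g x0 = 0" using m0 s1 by simp
    then show ?thesis using const by (metis ext)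
  qed
  define F where "F v = vec_lambda (L (vec_nth v))" for v :: "real^'a"
  have Ladd: "L (\<lambda>x. a x + b x) = (\<lambda>x. L a x + L b x)" for a b
    unfolding L_def mv_def by (auto simp: algebra_simps sum.distrib)
  have Lscale: "L (\<lambda>x. c * a x) = (\<lambda>x. c * L a x)" for a c
    unfolding L_def mv_def by (auto simp: algebra_simps sum_distrib_left)
  have vn: "vec_nth (vec_lambda f) = f" for f :: "'a \<Rightarrow> real" by (simp add: fun_eq_iff)
  have lin: "linear F"
  proof (rule linearI)
    fix v w :: "real^'a"
    show "F (v + w) = F v + F w" unfolding F_def using Ladd[of "vec_nth v" "vec_nth w"]
      by (simp add: vec_eq_iff plus_vec_def vn)
  next
    fix c :: real and v :: "real^'a"
    show "F (c *\<^sub>R v) = c *\<^sub>R F v" unfolding F_def using Lscale[of c "vec_nth v"]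
      by (simp add: vec_eq_iff scaleR_vec_def vn)
  qed
  have "inj F"
  proof (rule injI)
    fix v w assume "F v = F w"
    then have "F (v - w) = 0" using lin by (simp add: linear_diff)
    then have "L (vec_nth (v - w)) = (\<lambda>_. 0)" unfolding F_def by (simp add: vec_eq_iff fun_eq_iff)
    then have "vec_nth (v - w) = (\<lambda>_. 0)" by (rule ker)
    then show "v = w" by (simp add: vec_eq_iff fun_eq_iff)
  qed
  then have "surj F" using lin by (rule linear_inj_imp_surj[rotated])
  then obtain v where "F v = vec_lambda h" by (metis surjD)
  then have Lh: "L (vec_nth v) = h" unfolding F_def by (simp add: vec_eq_iff fun_eq_iff)
  then have "(\<Sum>x\<in>UNIV. \<pi> x * vec_nth v x) = 0" using sumL[of "vec_nth v"] assms(6) by simp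
  then have "\<forall>x. vec_nth v x - mv P (vec_nth v) x = h x" using Lh unfolding L_def by auto
  then show ?thesis by blast
qed



lemma sum_PiE_Suc:
  "(\<Sum>xs\<in>PiE {..<Suc N} (\<lambda>_. UNIV). F xs) = (\<Sum>g\<in>PiE {..<N} (\<lambda>_. UNIV::'a::finite set). \<Sum>y\<in>UNIV. F (g(N:=y)))"
proof -
  have "PiE {..<Suc N} (\<lambda>_. UNIV::'a set) = (\<lambda>(y, g). g(N := y)) ` (UNIV \<times> PiE {..<N} (\<lambda>_. UNIV))"
    by (simp add: lessThan_Suc PiE_insert_eq)
  moreover have "inj_on (\<lambda>(y, g). g(N := y)) (UNIV \<times> PiE {..<N} (\<lambda>_. UNIV::'a set))"
    using inj_combinator[of N "{..<N}" "\<lambda>_. UNIV::'a set"] by simp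
  ultimately have "(\<Sum>xs\<in>PiE {..<Suc N} (\<lambda>_. UNIV). F xs) = (\<Sum>p\<in>UNIV \<times> PiE {..<N} (\<lambda>_. UNIV::'a set). F ((\<lambda>(y, g). g(N := y)) p))"
    by (simp add: sum.reindex)
  also have "\<dots> = (\<Sum>y\<in>UNIV. \<Sum>g\<in>PiE {..<N} (\<lambda>_. UNIV::'a set). F (g(N:=y)))"
    by (simp add: sum.cartesian_product case_prod_unfold)
  also have "\<dots> = (\<Sum>g\<in>PiE {..<N} (\<lambda>_. UNIV::'a set). \<Sum>y\<in>UNIV. F (g(N:=y)))"
    by (rule sum.swap)
  finally show ?thesis .
qed

lemma pp_Suc:
  assumes "1 \<le> N"
  shows "path_prob \<pi> P (Suc N) (g(N:=y)) = path_prob \<pi> P N g * P (g (N-1)) y"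
proof -
  obtain M where N: "N = Suc M" using assms by (cases N) auto
  have "(\<Prod>i<N. P ((g(N:=y)) i) ((g(N:=y)) (Suc i))) = (\<Prod>i<M. P (g i) (g (Suc i))) * P (g M) y"
    unfolding N by (simp add: lessThan_Suc)
  then show ?thesis unfolding path_prob_def N by simp
qed

lemma pp_one: "path_prob \<pi> P (Suc 0) (g(0:=y)) = \<pi> y"
  unfolding path_prob_def by simp

lemma pp_nonneg: "\<forall>x. 0 \<le> \<pi> x \<Longrightarrow> transition_matrix P \<Longrightarrow> 0 \<le> path_prob \<pi> P N xs"
  unfolding path_prob_def transition_matrix_def by (intro mult_nonneg_nonneg prod_nonneg) auto

lemma E_Suc:
  assumes "1 \<le> N" "\<And>xs y. G (xs(N:=y)) = G xs"
  shows "path_expectation \<pi> P (Suc N) (\<lambda>xs. G xs * H (xs (N-1)) (xs N))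
       = path_expectation \<pi> P N (\<lambda>xs. G xs * (\<Sum>y\<in>UNIV. P (xs (N-1)) y * H (xs (N-1)) y))"
proof -
  have "N - 1 \<noteq> N" using assms(1) by simp
  have "path_expectation \<pi> P (Suc N) (\<lambda>xs. G xs * H (xs (N-1)) (xs N))
     = (\<Sum>g\<in>PiE {..<N} (\<lambda>_. UNIV). \<Sum>y\<in>UNIV. path_prob \<pi> P (Suc N) (g(N:=y)) * (G (g(N:=y)) * H ((g(N:=y)) (N-1)) ((g(N:=y)) N)))"
    unfolding path_expectation_def by (rule sum_PiE_Suc)
  also have "\<dots> = (\<Sum>g\<in>PiE {..<N} (\<lambda>_. UNIV). \<Sum>y\<in>UNIV. path_prob \<pi> P N g * (G g * (P (g (N-1)) y * H (g (N-1)) y)))"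
    using assms \<open>N - 1 \<noteq> N\<close> by (intro sum.cong refl) (simp add: pp_Suc algebra_simps)
  also have "\<dots> = path_expectation \<pi> P N (\<lambda>xs. G xs * (\<Sum>y\<in>UNIV. P (xs (N-1)) y * H (xs (N-1)) y))"
    unfolding path_expectation_def by (simp add: sum_distrib_left)
  finally show ?thesis .
qed

lemma E_one: "path_expectation \<pi> P (Suc 0) (\<lambda>xs. k (xs 0)) = (\<Sum>x\<in>UNIV. \<pi> x * k x)"
proof -
  have "path_expectation \<pi> P (Suc 0) (\<lambda>xs. k (xs 0))
     = (\<Sum>g\<in>PiE {..<0} (\<lambda>_. UNIV::'a set). \<Sum>y\<in>UNIV. path_prob \<pi> P (Suc 0) (g(0:=y)) * k ((g(0:=y)) 0))"
    unfolding path_expectation_def by (rule sum_PiE_Suc)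
  also have "\<dots> = (\<Sum>x\<in>UNIV. \<pi> x * k x)" by (simp add: pp_one)
  finally show ?thesis .
qed

lemma E_add: "path_expectation \<pi> P N (\<lambda>xs. F xs + G xs) = path_expectation \<pi> P N F + path_expectation \<pi> P N G"
  unfolding path_expectation_def by (simp add: algebra_simps sum.distrib)
lemma E_diff: "path_expectation \<pi> P N (\<lambda>xs. F xs - G xs) = path_expectation \<pi> P N F - path_expectation \<pi> P N G"
  unfolding path_expectation_def by (simp add: algebra_simps sum_subtractf)
lemma E_cmult: "path_expectation \<pi> P N (\<lambda>xs. c * F xs) = c * path_expectation \<pi> P N F"
  unfolding path_expectation_def by (simp add: algebra_simps sum_distrib_left)
lemma E_sum: "path_expectation \<pi> P N (\<lambda>xs. \<Sum>i\<in>I. F i xs) = (\<Sum>i\<in>I. path_expectation \<pi> P N (F i))"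
  unfolding path_expectation_def by (simp add: sum_distrib_left sum.swap[of _ I])
lemma E_cong: "(\<And>xs. xs \<in> PiE {..<N} (\<lambda>_. UNIV) \<Longrightarrow> F xs = G xs) \<Longrightarrow> path_expectation \<pi> P N F = path_expectation \<pi> P N G"
  unfolding path_expectation_def by (auto intro!: sum.cong)
lemma E_mono: "\<forall>x. 0 \<le> \<pi> x \<Longrightarrow> transition_matrix P \<Longrightarrow> (\<And>xs. F xs \<le> G xs) \<Longrightarrow> path_expectation \<pi> P N F \<le> path_expectation \<pi> P N G"
  unfolding path_expectation_def by (auto intro!: sum_mono mult_left_mono pp_nonneg)

lemma E_marg:
  assumes "transition_matrix P" "1 \<le> N" "\<And>xs y. G (xs(N:=y)) = G xs"
  shows "path_expectation \<pi> P (Suc N) G = path_expectation \<pi> P N G"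
proof -
  have "path_expectation \<pi> P (Suc N) G = path_expectation \<pi> P (Suc N) (\<lambda>xs. G xs * (\<lambda>_ _. 1) (xs (N-1)) (xs N))"
    by simp
  also have "\<dots> = path_expectation \<pi> P N (\<lambda>xs. G xs * (\<Sum>y\<in>UNIV. P (xs (N-1)) y * 1))"
    by (rule E_Suc[OF assms(2,3)])
  also have "\<dots> = path_expectation \<pi> P N G" using assms(1) unfolding transition_matrix_def by simp
  finally show ?thesis .
qed

lemma E_last:
  assumes "transition_matrix P" "reversible_wrt \<pi> P" "1 \<le> N"
  shows "path_expectation \<pi> P N (\<lambda>xs. k (xs (N-1))) = (\<Sum>x\<in>UNIV. \<pi> x * k x)"
  using assms(3)
proof (induction N arbitrary: k rule: nat_induct_at_least)
  case base then show ?case using E_one[of \<pi> P k] by simp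
next
  case (Suc N)
  have "path_expectation \<pi> P (Suc N) (\<lambda>xs. k (xs (Suc N - 1)))
      = path_expectation \<pi> P (Suc N) (\<lambda>xs. (\<lambda>_. 1) xs * (\<lambda>_ y. k y) (xs (N-1)) (xs N))" by simp
  also have "\<dots> = path_expectation \<pi> P N (\<lambda>xs. 1 * (\<Sum>y\<in>UNIV. P (xs (N-1)) y * k y))"
    by (rule E_Suc[OF Suc.hyps]) simp
  also have "\<dots> = path_expectation \<pi> P N (\<lambda>xs. mv P k (xs (N-1)))" by (simp add: mv_def)
  also have "\<dots> = (\<Sum>x\<in>UNIV. \<pi> x * mv P k x)" by (rule Suc.IH)
  also have "\<dots> = (\<Sum>x\<in>UNIV. \<pi> x * k x)" by (rule pi_mv[OF assms(1,2)])
  finally show ?case .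
qed

lemma E_coord:
  assumes "transition_matrix P" "reversible_wrt \<pi> P" "i < N"
  shows "path_expectation \<pi> P N (\<lambda>xs. k (xs i)) = (\<Sum>x\<in>UNIV. \<pi> x * k x)"
  using assms(3)
proof (induction N)
  case 0 then show ?case by simp
next
  case (Suc M)
  show ?case
  proof (cases "i = M")
    case True then show ?thesis using E_last[OF assms(1,2), of "Suc M" k] by simp
  next
    case False
    then have "i < M" "1 \<le> M" using Suc.prems by auto
    then have "path_expectation \<pi> P (Suc M) (\<lambda>xs. k (xs i)) = path_expectation \<pi> P M (\<lambda>xs. k (xs i))"
      by (intro E_marg[OF assms(1)]) auto
    then show ?thesis using Suc.IH \<open>i < M\<close> by simp
  qed
qed



lemma amgm_e:
  fixes a b e :: real
  assumes "0 < e"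
  shows "\<bar>2 * a * b\<bar> \<le> e * a^2 + b^2 / e"
proof -
  have "0 \<le> (e * \<bar>a\<bar> - \<bar>b\<bar>)^2" by simp
  then have "e * \<bar>2 * a * b\<bar> \<le> e * (e * a^2 + b^2 / e)"
    using assms by (simp add: power2_eq_square algebra_simps abs_mult)
  then show ?thesis using assms by simp
qed

context
  fixes \<pi> :: "'a::finite \<Rightarrow> real" and P :: "'a \<Rightarrow> 'a \<Rightarrow> real" and u h :: "'a \<Rightarrow> real"
  assumes tm: "transition_matrix P" and rev: "reversible_wrt \<pi> P"
    and pos: "\<forall>x. 0 \<le> \<pi> x" and pd: "prob_distribution \<pi>"
    and uh: "\<And>x. u x - mv P u x = h x" and hmean: "(\<Sum>x\<in>UNIV. \<pi> x * h x) = 0"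
begin

definition "Dm x y = u y - mv P u x"
definition "Mt (N::nat) xs = (\<Sum>i\<in>{1..<N}. Dm (xs (i-1)) (xs i))"
definition "cc = (\<Sum>x\<in>UNIV. \<pi> x * (\<Sum>y\<in>UNIV. P x y * (Dm x y)^2))"

lemma Mt_Suc: "1 \<le> N \<Longrightarrow> Mt (Suc N) xs = Mt N xs + Dm (xs (N-1)) (xs N)"
  unfolding Mt_def by (simp add: atLeastLessThanSuc)

lemma Mt_upd: "Mt N (xs(N:=y)) = Mt N xs"
  unfolding Mt_def
proof (intro sum.cong refl)
  fix i assume "i \<in> {1..<N}"
  then have "i \<noteq> N" "i - 1 \<noteq> N" by auto
  then show "Dm ((xs(N:=y)) (i-1)) ((xs(N:=y)) i) = Dm (xs (i-1)) (xs i)" by simp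
qed

lemma PDm: "(\<Sum>y\<in>UNIV. P x y * Dm x y) = 0"
proof -
  have "(\<Sum>y\<in>UNIV. P x y * Dm x y) = mv P u x - (\<Sum>y\<in>UNIV. P x y) * mv P u x"
    unfolding Dm_def mv_def by (simp add: algebra_simps sum_subtractf sum_distrib_right)
  then show ?thesis using tm unfolding transition_matrix_def by simp
qed

lemma E_one_const: "1 \<le> N \<Longrightarrow> path_expectation \<pi> P N (\<lambda>_. c) = c"
  using E_last[OF tm rev, of N "\<lambda>_. c"] pd unfolding prob_distribution_def
  by (simp add: sum_distrib_right[symmetric])

lemma EM2: "1 \<le> N \<Longrightarrow> path_expectation \<pi> P N (\<lambda>xs. (Mt N xs)^2) = (real N - 1) * cc"
proof (induction N rule: nat_induct_at_least)
  case base
  then show ?case unfolding Mt_def path_expectation_def by simp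
next
  case (Suc N)
  have t1: "path_expectation \<pi> P (Suc N) (\<lambda>xs. (Mt N xs)^2) = (real N - 1) * cc"
    using E_marg[OF tm Suc.hyps, of "\<lambda>xs. (Mt N xs)^2" \<pi>] Suc.IH by (simp add: Mt_upd)
  have t2: "path_expectation \<pi> P (Suc N) (\<lambda>xs. 2 * Mt N xs * Dm (xs (N-1)) (xs N)) = 0"
  proof -
    have "path_expectation \<pi> P (Suc N) (\<lambda>xs. 2 * Mt N xs * Dm (xs (N-1)) (xs N))
       = path_expectation \<pi> P N (\<lambda>xs. 2 * Mt N xs * (\<Sum>y\<in>UNIV. P (xs (N-1)) y * Dm (xs (N-1)) y))"
      by (rule E_Suc[where G="\<lambda>xs. 2 * Mt N xs" and H=Dm and N=N]) (use Suc.hyps Mt_upd in auto)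
    then show ?thesis by (simp add: PDm path_expectation_def)
  qed
  have t3: "path_expectation \<pi> P (Suc N) (\<lambda>xs. (Dm (xs (N-1)) (xs N))^2) = cc"
  proof -
    have "path_expectation \<pi> P (Suc N) (\<lambda>xs. (\<lambda>_. 1) xs * (\<lambda>x y. (Dm x y)^2) (xs (N-1)) (xs N))
       = path_expectation \<pi> P N (\<lambda>xs. (\<lambda>_. 1) xs * (\<Sum>y\<in>UNIV. P (xs (N-1)) y * (\<lambda>x y. (Dm x y)^2) (xs (N-1)) y))"
      by (rule E_Suc[OF Suc.hyps]) simp
    then show ?thesis
      using E_last[OF tm rev Suc.hyps, of "\<lambda>x. \<Sum>y\<in>UNIV. P x y * (Dm x y)^2"] unfolding cc_def by simp
  qed
  have "path_expectation \<pi> P (Suc N) (\<lambda>xs. (Mt (Suc N) xs)^2)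
     = path_expectation \<pi> P (Suc N) (\<lambda>xs. ((Mt N xs)^2 + 2 * Mt N xs * Dm (xs (N-1)) (xs N)) + (Dm (xs (N-1)) (xs N))^2)"
    using Suc.hyps by (intro E_cong) (simp add: Mt_Suc power2_eq_square algebra_simps)
  also have "\<dots> = (real N - 1) * cc + 0 + cc"
    unfolding E_add t1 t2 t3 ..
  also have "\<dots> = (real (Suc N) - 1) * cc" by (simp add: algebra_simps)
  finally show ?case .
qed

lemma S_eq: "1 \<le> N \<Longrightarrow> (\<Sum>i<N. h (xs i)) = Mt N xs + u (xs 0) - mv P u (xs (N-1))"
proof (induction N rule: nat_induct_at_least)
  case base
  then show ?case unfolding Mt_def using uh[of "xs 0"] by simp
next
  case (Suc N)
  then show ?case using uh[of "xs N"] by (simp add: Mt_Suc Dm_def)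
qed

lemma ES: "path_expectation \<pi> P N (\<lambda>xs. \<Sum>i<N. h (xs i)) = 0"
  by (simp add: E_sum E_coord[OF tm rev] hmean)

definition "Bu = (\<Sum>x\<in>UNIV. \<bar>u x\<bar>)"

lemma u_bound: "\<bar>u x\<bar> \<le> Bu"
  unfolding Bu_def by (rule member_le_sum) auto

lemma mv_bound: "\<bar>mv P u x\<bar> \<le> Bu"
proof -
  have "\<bar>mv P u x\<bar> \<le> (\<Sum>y\<in>UNIV. \<bar>P x y * u y\<bar>)" unfolding mv_def by (rule sum_abs)
  also have "\<dots> \<le> (\<Sum>y\<in>UNIV. P x y * Bu)"
    using tm unfolding transition_matrix_def by (intro sum_mono) (simp add: abs_mult mult_left_mono u_bound)
  also have "\<dots> = Bu" using tm unfolding transition_matrix_def by (simp add: sum_distrib_right[symmetric])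
  finally show ?thesis .
qed

lemma R_bound: "(u a - mv P u b)^2 \<le> 4 * Bu^2"
proof -
  have "\<bar>u a - mv P u b\<bar> \<le> 2 * Bu" using u_bound[of a] mv_bound[of b] by linarith
  then have "\<bar>u a - mv P u b\<bar>^2 \<le> (2 * Bu)^2" by (rule power_mono) simp
  then show ?thesis by (simp add: power_mult_distrib)
qed

lemma cc_nonneg: "0 \<le> cc"
  unfolding cc_def using pos tm unfolding transition_matrix_def by (intro sum_nonneg mult_nonneg_nonneg) auto

lemma ES2_bound:
  assumes "1 \<le> N" "0 < e"
  shows "\<bar>path_expectation \<pi> P N (\<lambda>xs. (\<Sum>i<N. h (xs i))^2) - (real N - 1) * cc\<bar>
          \<le> e * ((real N - 1) * cc) + (1 + 1/e) * (4 * Bu^2)"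
proof -
  define K where "K = 4 * Bu^2"
  have pw: "\<bar>(\<Sum>i<N. h (xs i))^2 - (Mt N xs)^2\<bar> \<le> e * (Mt N xs)^2 + (1 + 1/e) * K" for xs
  proof -
    define R where "R = u (xs 0) - mv P u (xs (N-1))"
    have S: "(\<Sum>i<N. h (xs i)) = Mt N xs + R" unfolding R_def using S_eq[OF assms(1)] by simp
    have RK: "R^2 \<le> K" unfolding R_def K_def by (rule R_bound)
    have A: "\<bar>2 * Mt N xs * R\<bar> \<le> e * (Mt N xs)^2 + R^2 / e" by (rule amgm_e[OF assms(2)])
    have A1: "2 * Mt N xs * R \<le> e * (Mt N xs)^2 + R^2 / e" using abs_le_D1[OF A] .
    have A2: "- (2 * Mt N xs * R) \<le> e * (Mt N xs)^2 + R^2 / e" using abs_le_D2[OF A] .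
    have B: "R^2 / e \<le> K / e" using RK assms(2) by (simp add: divide_right_mono)
    have C: "(\<Sum>i<N. h (xs i))^2 - (Mt N xs)^2 = 2 * Mt N xs * R + R^2"
      unfolding S by (simp add: power2_eq_square algebra_simps)
    have D: "0 \<le> R^2" by simp
    have E: "(1 + 1/e) * K = K + K/e" by (simp add: algebra_simps)
    have F: "0 \<le> R^2 / e" using assms(2) by simp
    show ?thesis unfolding C E by (intro abs_leI) (use A1 A2 B D F RK in linarith)+
  qed
  have up: "path_expectation \<pi> P N (\<lambda>xs. (\<Sum>i<N. h (xs i))^2)
      \<le> path_expectation \<pi> P N (\<lambda>xs. (1 + e) * (Mt N xs)^2 + (1 + 1/e) * K)"
  proof (intro E_mono[OF pos tm])
    fix xs
    have "(1 + e) * (Mt N xs)^2 = (Mt N xs)^2 + e * (Mt N xs)^2" by (simp add: algebra_simps)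
    then show "(\<Sum>i<N. h (xs i))^2 \<le> (1 + e) * (Mt N xs)^2 + (1 + 1/e) * K"
      using abs_le_D1[OF pw[of xs]] abs_le_D2[OF pw[of xs]] by linarith
  qed
  have lo: "path_expectation \<pi> P N (\<lambda>xs. (1 - e) * (Mt N xs)^2 - (1 + 1/e) * K)
      \<le> path_expectation \<pi> P N (\<lambda>xs. (\<Sum>i<N. h (xs i))^2)"
  proof (intro E_mono[OF pos tm])
    fix xs
    have "(1 - e) * (Mt N xs)^2 = (Mt N xs)^2 - e * (Mt N xs)^2" by (simp add: algebra_simps)
    then show "(1 - e) * (Mt N xs)^2 - (1 + 1/e) * K \<le> (\<Sum>i<N. h (xs i))^2"
      using abs_le_D1[OF pw[of xs]] abs_le_D2[OF pw[of xs]] by linarith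
  qed
  have e1: "path_expectation \<pi> P N (\<lambda>xs. (1 + e) * (Mt N xs)^2 + (1 + 1/e) * K)
      = (1 + e) * ((real N - 1) * cc) + (1 + 1/e) * K"
    by (simp add: E_add E_cmult EM2[OF assms(1)] E_one_const[OF assms(1)])
  have e2: "path_expectation \<pi> P N (\<lambda>xs. (1 - e) * (Mt N xs)^2 - (1 + 1/e) * K)
      = (1 - e) * ((real N - 1) * cc) - (1 + 1/e) * K"
    by (simp add: E_diff E_cmult EM2[OF assms(1)] E_one_const[OF assms(1)])
  have a1: "(1 + e) * ((real N - 1) * cc) = (real N - 1) * cc + e * ((real N - 1) * cc)" by (simp add: algebra_simps)
  have a2: "(1 - e) * ((real N - 1) * cc) = (real N - 1) * cc - e * ((real N - 1) * cc)" by (simp add: algebra_simps)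
  show ?thesis unfolding K_def[symmetric] by (intro abs_leI) (use up lo e1 e2 a1 a2 in linarith)+
qed

lemma var_limit: "(\<lambda>N. sum_variance \<pi> P h N / real N) \<longlonglongrightarrow> cc"
proof -
  define K where "K = 4 * Bu^2"
  have K0: "0 \<le> K" unfolding K_def by simp
  define g where "g N = (cc + K) / sqrt (real N) + (K + cc) / real N" for N :: nat
  have l1: "(\<lambda>N. (cc + K) / sqrt (real N)) \<longlonglongrightarrow> 0"
    by (intro tendsto_divide_0[OF tendsto_const] filterlim_at_top_imp_at_infinity
        filterlim_compose[OF sqrt_at_top filterlim_real_sequentially])
  have l2: "(\<lambda>N. (K + cc) / real N) \<longlonglongrightarrow> 0"
    by (intro tendsto_divide_0[OF tendsto_const] filterlim_at_top_imp_at_infinity filterlim_real_sequentially)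
  have g0: "g \<longlonglongrightarrow> 0" unfolding g_def using tendsto_add[OF l1 l2] by simp
  have bnd: "\<bar>sum_variance \<pi> P h N / real N - cc\<bar> \<le> g N" if N1: "1 \<le> N" for N
  proof -
    define x where "x = path_expectation \<pi> P N (\<lambda>xs. (\<Sum>i<N. h (xs i))^2)"
    have sv: "sum_variance \<pi> P h N = x" unfolding sum_variance_def x_def ES by simp
    have sN: "0 < sqrt (real N)" using N1 by simp
    have "\<bar>x - (real N - 1) * cc\<bar> \<le> (1 / sqrt (real N)) * ((real N - 1) * cc) + (1 + 1/(1 / sqrt (real N))) * K"
      unfolding x_def K_def using ES2_bound[OF N1, of "1 / sqrt (real N)"] sN by simp
    also have "\<dots> = ((real N - 1) * cc) / sqrt (real N) + K + K * sqrt (real N)" by (simp add: algebra_simps add_divide_distrib diff_divide_distrib)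
    also have "\<dots> \<le> cc * sqrt (real N) + K + K * sqrt (real N)"
    proof -
      have "(real N - 1) \<le> real N" by simp
      also have "real N = sqrt (real N) * sqrt (real N)" by simp
      finally have "(real N - 1) / sqrt (real N) \<le> sqrt (real N)" using sN by (simp add: divide_le_eq)
      then have "((real N - 1) / sqrt (real N)) * cc \<le> sqrt (real N) * cc" using cc_nonneg by (rule mult_right_mono)
      then show ?thesis by (simp add: algebra_simps)
    qed
    finally have xb: "\<bar>x - (real N - 1) * cc\<bar> \<le> cc * sqrt (real N) + K + K * sqrt (real N)" .
    have "\<bar>x - real N * cc\<bar> \<le> \<bar>x - (real N - 1) * cc\<bar> + cc" using cc_nonneg by (intro abs_leI) (auto simp: algebra_simps abs_le_iff)
    also have "\<dots> \<le> (cc + K) * sqrt (real N) + K + cc" using xb by (simp add: algebra_simps)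
    finally have "\<bar>x - real N * cc\<bar> \<le> (cc + K) * sqrt (real N) + K + cc" .
    then have xb2: "\<bar>x - real N * cc\<bar> / real N \<le> ((cc + K) * sqrt (real N) + K + cc) / real N"
      by (rule divide_right_mono) simp
    have "x / real N - cc = (x - real N * cc) / real N" using N1 by (simp add: field_simps)
    then have xe: "\<bar>x / real N - cc\<bar> = \<bar>x - real N * cc\<bar> / real N" by simp
    define s where "s = sqrt (real N)"
    have s0: "0 < s" unfolding s_def using sN .
    have Ns: "real N = s * s" unfolding s_def by simp
    have "((cc + K) * s + K + cc) / (s * s) = (cc + K) / s + (K + cc) / (s * s)"
      using s0 by (simp add: field_simps)
    then have ge: "((cc + K) * sqrt (real N) + K + cc) / real N = g N"
      unfolding g_def s_def[symmetric] unfolding Ns by simp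
    show ?thesis unfolding sv xe using xb2 ge by simp
  qed
  have "(\<lambda>N. sum_variance \<pi> P h N / real N - cc) \<longlonglongrightarrow> 0"
    by (rule Lim_null_comparison[OF _ g0]) (use bnd in \<open>auto intro: eventually_sequentiallyI[of 1]\<close>)
  then show ?thesis by (rule LIM_zero_cancel)
qed

lemma asym_var: "asymptotic_variance \<pi> P h = cc"
  unfolding asymptotic_variance_def using var_limit by (rule limI)

lemma cc_eq: "cc = ip \<pi> u u - ip \<pi> (mv P u) (mv P u)"
proof -
  define w where "w = mv P u"
  have pt: "\<pi> x * (\<Sum>y\<in>UNIV. P x y * (u y - w x)^2) = (\<Sum>y\<in>UNIV. \<pi> x * P x y * (u y)^2)
      - 2 * (\<pi> x * w x * (\<Sum>y\<in>UNIV. P x y * u y)) + \<pi> x * (w x)^2 * (\<Sum>y\<in>UNIV. P x y)" for x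
    by (simp add: power2_diff sum_distrib_left sum_distrib_right sum_subtractf sum.distrib algebra_simps)
  have "cc = (\<Sum>x\<in>UNIV. \<Sum>y\<in>UNIV. \<pi> x * P x y * (u y)^2) - 2 * (\<Sum>x\<in>UNIV. \<pi> x * w x * (\<Sum>y\<in>UNIV. P x y * u y))
      + (\<Sum>x\<in>UNIV. \<pi> x * (w x)^2 * (\<Sum>y\<in>UNIV. P x y))"
    unfolding cc_def Dm_def w_def[symmetric] pt
    by (simp add: sum.distrib sum_subtractf sum_distrib_left)
  also have "(\<Sum>x\<in>UNIV. \<Sum>y\<in>UNIV. \<pi> x * P x y * (u y)^2) = ip \<pi> u u"
  proof -
    have "(\<Sum>x\<in>UNIV. \<Sum>y\<in>UNIV. \<pi> x * P x y * (u y)^2) = (\<Sum>y\<in>UNIV. \<Sum>x\<in>UNIV. \<pi> x * P x y * (u y)^2)"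
      by (rule sum.swap)
    also have "\<dots> = (\<Sum>y\<in>UNIV. (\<Sum>x\<in>UNIV. \<pi> x * P x y) * (u y)^2)" by (simp add: sum_distrib_right)
    also have "\<dots> = ip \<pi> u u" using stat[OF tm rev] unfolding ip_def by (simp add: power2_eq_square mult.assoc)
    finally show ?thesis .
  qed
  also have "(\<Sum>x\<in>UNIV. \<pi> x * w x * (\<Sum>y\<in>UNIV. P x y * u y)) = ip \<pi> w w"
    unfolding ip_def w_def mv_def by simp
  also have "(\<Sum>x\<in>UNIV. \<pi> x * (w x)^2 * (\<Sum>y\<in>UNIV. P x y)) = ip \<pi> w w"
    using tm unfolding ip_def transition_matrix_def by (simp add: power2_eq_square mult.assoc)
  finally show ?thesis unfolding w_def by simp
qed

end



lemma ip_two: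
  fixes P :: "'a::finite \<Rightarrow> 'a \<Rightarrow> real"
  fixes t :: real
  assumes "a \<noteq> b"
  defines "g \<equiv> (\<lambda>z. (if z = a then 1 else 0) + (if z = b then t else 0))"
  shows "ip \<pi> g (mv P g) = \<pi> a * P a a + t * (\<pi> a * P a b) + t * (\<pi> b * P b a) + t^2 * (\<pi> b * P b b)"
proof -
  have mvg: "mv P g x = P x a + t * P x b" for x
  proof -
    have "mv P g x = (\<Sum>y\<in>UNIV. (if y = a then P x y else 0) + (if y = b then t * P x y else 0))"
      unfolding mv_def g_def by (intro sum.cong refl) (auto simp: algebra_simps)
    also have "\<dots> = P x a + t * P x b" by (simp add: sum.distrib sum.delta)
    finally show ?thesis .
  qed
  have "ip \<pi> g (mv P g) = (\<Sum>x\<in>UNIV. (if x = a then \<pi> x * mv P g x else 0) + (if x = b then t * (\<pi> x * mv P g x) else 0))"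
    unfolding ip_def g_def by (intro sum.cong refl) (auto simp: algebra_simps)
  also have "\<dots> = \<pi> a * mv P g a + t * (\<pi> b * mv P g b)"
    by (simp add: sum.distrib)
  finally show ?thesis unfolding mvg by (simp add: algebra_simps power2_eq_square)
qed

lemma ip_one:
  fixes P :: "'a::finite \<Rightarrow> 'a \<Rightarrow> real"
  shows "ip \<pi> (\<lambda>z. if z = a then 1 else 0) (mv P (\<lambda>z. if z = a then 1 else 0)) = \<pi> a * P a a"
proof -
  have mvg: "mv P (\<lambda>z. if z = a then 1 else 0) x = P x a" for x
  proof -
    have "mv P (\<lambda>z. if z = a then 1 else 0) x = (\<Sum>y\<in>UNIV. if y = a then P x y else 0)"
      unfolding mv_def by (intro sum.cong refl) auto
    then show ?thesis by (simp add: sum.delta)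
  qed
  have "ip \<pi> (\<lambda>z. if z = a then 1 else 0) (mv P (\<lambda>z. if z = a then 1 else 0)) = (\<Sum>x\<in>UNIV. if x = a then \<pi> x * P x a else 0)"
    unfolding ip_def mvg by (intro sum.cong refl) auto
  then show ?thesis by (simp add: sum.delta)
qed



lemma key:
  fixes \<pi> :: "'a::finite \<Rightarrow> real" and P Q :: "'a \<Rightarrow> 'a \<Rightarrow> real"
  assumes pd: "prob_distribution \<pi>" and pos: "\<forall>x. 0 < \<pi> x"
    and tmP: "transition_matrix P" and tmQ: "transition_matrix Q"
    and irrP: "irreducible_tm P"
    and revP: "reversible_wrt \<pi> P" and revQ: "reversible_wrt \<pi> Q"
    and dom: "efficiency_dominates \<pi> P Q"
  shows "ip \<pi> g (mv P g) \<le> ip \<pi> g (mv Q g)"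
proof -
  have pos0: "\<forall>x. 0 \<le> \<pi> x" using pos by (simp add: less_imp_le)
  define h where "h = (\<lambda>x. g x - mv Q g x)"
  have hmean: "(\<Sum>x\<in>UNIV. \<pi> x * h x) = 0"
    unfolding h_def using pi_mv[OF tmQ revQ, of g] by (simp add: right_diff_distrib sum_subtractf)
  obtain u where uh: "\<And>x. u x - mv P u x = h x"
    using poisson[OF pd pos tmP revP irrP hmean] by blast
  have gh: "\<And>x. g x - mv Q g x = h x" unfolding h_def by simp
  have vQ: "asymptotic_variance \<pi> Q h = ip \<pi> g g - ip \<pi> (mv Q g) (mv Q g)"
    using asym_var[OF tmQ revQ pos0 pd gh hmean] cc_eq[OF tmQ revQ pos0 pd gh hmean] by simp
  have vP: "asymptotic_variance \<pi> P h = ip \<pi> u u - ip \<pi> (mv P u) (mv P u)"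
    using asym_var[OF tmP revP pos0 pd uh hmean] cc_eq[OF tmP revP pos0 pd uh hmean] by simp
  have d: "asymptotic_variance \<pi> P h \<le> asymptotic_variance \<pi> Q h"
    using dom unfolding efficiency_dominates_def by blast
  define w where "w = mv P u"
  define pg where "pg = mv P g"
  define qg where "qg = mv Q g"
  have qgeq: "qg = (\<lambda>x. g x - u x + w x)"
    using uh gh unfolding qg_def w_def by (auto simp: fun_eq_iff algebra_simps)
  have mvd: "mv P (\<lambda>x. g x - u x) = (\<lambda>x. pg x - w x)"
    unfolding mv_def pg_def w_def by (auto simp: fun_eq_iff algebra_simps sum_subtractf)
  have ps: "ip \<pi> (\<lambda>x. g x - u x) (\<lambda>x. pg x - w x) \<le> ip \<pi> (\<lambda>x. g x - u x) (\<lambda>x. g x - u x)"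
    using psd[OF tmP revP pos0, of "\<lambda>x. g x - u x"] unfolding mvd .
  have sa: "ip \<pi> u pg = ip \<pi> w g" unfolding pg_def w_def by (rule selfadj[OF revP])
  have sym: "ip \<pi> w g = ip \<pi> g w" unfolding ip_def by (simp add: algebra_simps)
  have x1: "ip \<pi> (\<lambda>x. g x - u x) (\<lambda>x. pg x - w x) = ip \<pi> g pg - ip \<pi> g w - ip \<pi> u pg + ip \<pi> u w"
    unfolding ip_def by (simp add: algebra_simps sum.distrib sum_subtractf)
  have x2: "ip \<pi> (\<lambda>x. g x - u x) (\<lambda>x. g x - u x) = ip \<pi> g g - 2 * ip \<pi> g u + ip \<pi> u u"
    unfolding ip_def by (simp add: algebra_simps sum.distrib sum_subtractf sum_distrib_left)
  have x3: "ip \<pi> qg qg = ip \<pi> g g + ip \<pi> u u + ip \<pi> w w - 2 * ip \<pi> g u + 2 * ip \<pi> g w - 2 * ip \<pi> u w"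
    unfolding ip_def qgeq by (simp add: algebra_simps sum.distrib sum_subtractf sum_distrib_left)
  have x4: "ip \<pi> g qg = ip \<pi> g g - ip \<pi> g u + ip \<pi> g w"
    unfolding ip_def qgeq by (simp add: algebra_simps sum.distrib sum_subtractf)
  have "ip \<pi> g pg \<le> ip \<pi> g qg"
    using d vP vQ ps x1 x2 x3 x4 sa sym unfolding w_def[symmetric] qg_def[symmetric] by linarith
  then show ?thesis unfolding pg_def qg_def .
qed



theorem theorem7:
  fixes \<pi> :: "'a::finite \<Rightarrow> real" and P Q :: "'a \<Rightarrow> 'a \<Rightarrow> real"
  assumes "prob_distribution \<pi>" and "\<forall>x. 0 < \<pi> x"
    and "transition_matrix P" and "transition_matrix Q"
    and "irreducible_tm P" and "irreducible_tm Q"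
    and "reversible_wrt \<pi> P" and "reversible_wrt \<pi> Q"
    and "efficiency_dominates \<pi> P Q" and "P \<noteq> Q"
  shows "trace_tm P < trace_tm Q"
proof -
  have K: "ip \<pi> g (mv P g) \<le> ip \<pi> g (mv Q g)" for g
    by (rule key[OF assms(1-5,7-9)])
  have diag: "P a a \<le> Q a a" for a
  proof -
    have "\<pi> a * P a a \<le> \<pi> a * Q a a" using K[of "\<lambda>z. if z = a then 1 else 0"] by (simp add: ip_one)
    then show ?thesis using assms(2) by (simp add: mult_le_cancel_left)
  qed
  have le: "trace_tm P \<le> trace_tm Q" unfolding trace_tm_def by (rule sum_mono) (rule diag)
  show ?thesis
  proof (rule ccontr)
    assume "\<not> trace_tm P < trace_tm Q"
    then have "trace_tm Q - trace_tm P = 0" using le by simp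
    then have "(\<Sum>a\<in>UNIV. Q a a - P a a) = 0" unfolding trace_tm_def by (simp add: sum_subtractf)
    then have deq: "P a a = Q a a" for a
      using diag by (subst (asm) sum_nonneg_eq_0_iff) auto
    have off: "P a b = Q a b" if ab: "a \<noteq> b" for a b
    proof -
      have rP: "\<pi> b * P b a = \<pi> a * P a b" using assms(7) unfolding reversible_wrt_def by metis
      have rQ: "\<pi> b * Q b a = \<pi> a * Q a b" using assms(8) unfolding reversible_wrt_def by metis
      have k1: "\<pi> a * P a a + 1 * (\<pi> a * P a b) + 1 * (\<pi> b * P b a) + 1^2 * (\<pi> b * P b b)
          \<le> \<pi> a * Q a a + 1 * (\<pi> a * Q a b) + 1 * (\<pi> b * Q b a) + 1^2 * (\<pi> b * Q b b)"
        using K[of "\<lambda>z. (if z = a then 1 else 0) + (if z = b then 1 else 0)"] unfolding ip_two[OF ab] .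
      have k2: "\<pi> a * P a a + (-1) * (\<pi> a * P a b) + (-1) * (\<pi> b * P b a) + (-1)^2 * (\<pi> b * P b b)
          \<le> \<pi> a * Q a a + (-1) * (\<pi> a * Q a b) + (-1) * (\<pi> b * Q b a) + (-1)^2 * (\<pi> b * Q b b)"
        using K[of "\<lambda>z. (if z = a then 1 else 0) + (if z = b then -1 else 0)"] unfolding ip_two[OF ab] .
      have "\<pi> a * P a b \<le> \<pi> a * Q a b" "\<pi> a * Q a b \<le> \<pi> a * P a b"
        using k1 k2 rP rQ deq[of a] deq[of b] by simp_all
      then have "\<pi> a * P a b = \<pi> a * Q a b" by linarith
      moreover have "\<pi> a \<noteq> 0" using assms(2) by (metis less_irrefl)
      ultimately show ?thesis by simp
    qed
    have "P = Q"
    proof (intro ext)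
      fix a b show "P a b = Q a b" by (cases "a = b") (use deq off in auto)
    qed
    then show False using assms(10) by simp
  qed
qed


end
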